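(* Let $n$ be a positive integer and $x\ge1$ real. Let $k$ be an integer in the range $$\min\{\Omega(d):d\in\mathcal{M}_x(n)\}\le k\le\max\{\Omega(d):d\in\mathcal{M}_x(n)\}$$ which is closest to $\Omega(n)/2$ among integers in this range. Then $|\mathcal{M}_x(n)|\le C_k(n)$.
   Context: $\Omega(n)$ is the number of prime factors of $n$ counted with multiplicity, and $C_k(n)$ is the number of positive divisors $d$ of $n$ with $\Omega(d)=k$. For $x\in\mathbb{R}$, a positive divisor $d$ of $n$ is maximal with respect to $x$ if $d\le x$ and there is no other positive divisor $d'$ of $n$ with $d'\le x$ and $d\mid d'$; $\mathcal{M}_x(n)$ denotes the set of such divisors. *)

theory Defs
  imports Complex_Main "HOL-Computational_Algebra.Primes"
begin

definition bigOmega :: "nat \<Rightarrow> nat" where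
  "bigOmega n = size (prime_factorization n)"

definition Ck :: "nat \<Rightarrow> nat \<Rightarrow> nat" where
  "Ck k n = card {d. 0 < d \<and> d dvd n \<and> bigOmega d = k}"

definition maxdivs :: "real \<Rightarrow> nat \<Rightarrow> nat set" where
  "maxdivs x n = {d. 0 < d \<and> d dvd n \<and> real d \<le> x \<and>
      \<not> (\<exists>d'. 0 < d' \<and> d' dvd n \<and> real d' \<le> x \<and> d dvd d' \<and> d' \<noteq> d)}"

end

theory Submission
  imports Defs
begin

definition scd :: "'a multiset set \<Rightarrow> nat \<Rightarrow> ('a multiset \<Rightarrow> nat list) \<Rightarrow> (nat list \<Rightarrow> nat) \<Rightarrow> bool" where
"scd S N \<beta> \<sigma> \<longleftrightarrow> (\<forall>x\<in>S. \<forall>y\<in>S. \<beta> x = \<beta> y \<longrightarrow> x \<subseteq># y \<or> y \<subseteq># x)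
  \<and> (\<forall>x\<in>S. \<sigma> (\<beta> x) \<le> size x \<and> size x + \<sigma> (\<beta> x) \<le> N)
  \<and> (\<forall>x\<in>S. \<forall>r. \<sigma> (\<beta> x) \<le> r \<and> r + \<sigma> (\<beta> x) \<le> N \<longrightarrow> (\<exists>y\<in>S. \<beta> y = \<beta> x \<and> size y = r))"

lemma decomp:
  assumes "A' \<subseteq># M + replicate_mset e a" "a \<notin># M"
  shows "\<exists>B j. B \<subseteq># M \<and> j \<le> e \<and> A' = B + replicate_mset j a"
proof -
  have 1: "filter_mset (\<lambda>x. x \<noteq> a) A' \<subseteq># M"
  proof (rule mset_subset_eqI)
    fix x
    have "count A' x \<le> count (M + replicate_mset e a) x" using assms(1) by (rule mset_subset_eq_count)
    then show "count (filter_mset (\<lambda>x. x \<noteq> a) A') x \<le> count M x" by (cases "x = a") simp_all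
  qed
  have 2: "count A' a \<le> e"
  proof -
    have "count A' a \<le> count (M + replicate_mset e a) a" using assms(1) by (rule mset_subset_eq_count)
    then show ?thesis using assms(2) by (simp add: not_in_iff)
  qed
  have 3: "A' = filter_mset (\<lambda>x. x \<noteq> a) A' + replicate_mset (count A' a) a"
    by (simp add: multiset_eq_iff)
  show ?thesis using 1 2 3 by blast
qed

lemma comp_facts:
  assumes "B \<subseteq># M" "a \<notin># M"
  shows "filter_mset (\<lambda>x. x \<noteq> a) (B + replicate_mset j a) = B"
    "count (B + replicate_mset j a) a = j"
proof -
  have "a \<notin># B"
  proof
    assume "a \<in># B" then have "a \<in># M" by (rule mset_subset_eqD[OF assms(1)])
    with assms(2) show False by simp
  qed
  then have "count B a = 0" by (simp add: not_in_iff)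
  then show "filter_mset (\<lambda>x. x \<noteq> a) (B + replicate_mset j a) = B"
    "count (B + replicate_mset j a) a = j"
    by (simp_all add: multiset_eq_iff)
qed

lemma rep_mono: "j1 \<le> j2 \<Longrightarrow> replicate_mset j1 a \<subseteq># replicate_mset j2 a"
  by (simp add: subseteq_mset_def)

lemma comparable_step:
  fixes B1 B2 :: "'a multiset"
  assumes "B1 \<subseteq># B2" "min j1 (N - s - size B1) = min j2 (N - s - size B2)"
    "size B2 + s \<le> N"
  shows "B1 + replicate_mset j1 a \<subseteq># B2 + replicate_mset j2 a \<or>
         B2 + replicate_mset j2 a \<subseteq># B1 + replicate_mset j1 a"
proof (cases "B1 = B2")
  case True
  then show ?thesis
    using subset_mset.add_left_mono[OF rep_mono[of j1 j2 a], of B1] subset_mset.add_left_mono[OF rep_mono[of j2 j1 a], of B1]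
    by (cases "j1 \<le> j2") auto
next
  case False
  then have "size B1 < size B2" using assms(1) by (simp add: mset_subset_size subset_mset.le_neq_trans)
  then have "j1 \<le> j2" using assms(2,3) unfolding min_def by (simp split: if_splits)
  then show ?thesis using subset_mset.add_mono[OF assms(1) rep_mono[of j1 j2 a]] by blast
qed

lemma scd_step:
  fixes M :: "'a multiset"
  assumes S: "scd {A. A \<subseteq># M} (size M) \<beta> \<sigma>" and aM: "a \<notin># M"
  shows "\<exists>\<beta>' \<sigma>'. scd {A. A \<subseteq># M + replicate_mset e a} (size M + e) \<beta>' \<sigma>'"
proof -
  define N where "N = size M"
  define key where "key B j = min j (N - \<sigma> (\<beta> B) - size B) # \<beta> B" for B j
  define \<beta>' where "\<beta>' A' = key (filter_mset (\<lambda>x. x \<noteq> a) A') (count A' a)" for A'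
  define \<sigma>' where "\<sigma>' ks = \<sigma> (tl ks) + hd ks" for ks
  have bk: "\<beta>' (B + replicate_mset j a) = key B j" if "B \<subseteq># M" for B j
    using comp_facts[OF that aM] by (simp add: \<beta>'_def)
  have S1: "\<And>x y. x \<subseteq># M \<Longrightarrow> y \<subseteq># M \<Longrightarrow> \<beta> x = \<beta> y \<Longrightarrow> x \<subseteq># y \<or> y \<subseteq># x"
   and S2: "\<And>x. x \<subseteq># M \<Longrightarrow> \<sigma> (\<beta> x) \<le> size x \<and> size x + \<sigma> (\<beta> x) \<le> N"
   and S3: "\<And>x r. x \<subseteq># M \<Longrightarrow> \<sigma> (\<beta> x) \<le> r \<Longrightarrow> r + \<sigma> (\<beta> x) \<le> N \<Longrightarrow> (\<exists>y. y \<subseteq># M \<and> \<beta> y = \<beta> x \<and> size y = r)"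
    using S unfolding scd_def N_def by auto
  have P1: "x \<subseteq># y \<or> y \<subseteq># x" if hx: "x \<subseteq># M + replicate_mset e a" "y \<subseteq># M + replicate_mset e a" "\<beta>' x = \<beta>' y" for x y
  proof -
    obtain B1 j1 where 1: "B1 \<subseteq># M" "j1 \<le> e" "x = B1 + replicate_mset j1 a" using decomp[OF hx(1) aM] by blast
    obtain B2 j2 where 2: "B2 \<subseteq># M" "j2 \<le> e" "y = B2 + replicate_mset j2 a" using decomp[OF hx(2) aM] by blast
    have k: "key B1 j1 = key B2 j2" using hx(3) 1 2 bk by metis
    then have eb: "\<beta> B1 = \<beta> B2" and el: "min j1 (N - \<sigma> (\<beta> B1) - size B1) = min j2 (N - \<sigma> (\<beta> B1) - size B2)"
      by (auto simp: key_def)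
    from S1[OF 1(1) 2(1) eb] show ?thesis
    proof
      assume "B1 \<subseteq># B2" then show ?thesis using comparable_step[OF _ el] S2[OF 2(1)] eb 1 2 by auto
    next
      assume "B2 \<subseteq># B1" then show ?thesis using comparable_step[OF _ el[symmetric]] S2[OF 1(1)] eb 1 2 by auto
    qed
  qed
  have P2: "\<sigma>' (\<beta>' x) \<le> size x \<and> size x + \<sigma>' (\<beta>' x) \<le> N + e" if hx: "x \<subseteq># M + replicate_mset e a" for x
  proof -
    obtain B j where 1: "B \<subseteq># M" "j \<le> e" "x = B + replicate_mset j a" using decomp[OF hx aM] by blast
    show ?thesis using S2[OF 1(1)] 1 bk[OF 1(1)] by (auto simp: key_def \<sigma>'_def min_def)
  qed
  have P3: "\<exists>y. y \<subseteq># M + replicate_mset e a \<and> \<beta>' y = \<beta>' x \<and> size y = r"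
    if hx: "x \<subseteq># M + replicate_mset e a" "\<sigma>' (\<beta>' x) \<le> r" "r + \<sigma>' (\<beta>' x) \<le> N + e" for x r
  proof -
    obtain B j where 1: "B \<subseteq># M" "j \<le> e" "x = B + replicate_mset j a" using decomp[OF hx(1) aM] by blast
    define s where "s = \<sigma> (\<beta> B)"
    define l where "l = min j (N - s - size B)"
    have bx: "\<beta>' x = l # \<beta> B" using bk[OF 1(1)] 1 by (simp add: key_def l_def s_def)
    have r1: "s + l \<le> r" "r + s + l \<le> N + e" using hx(2,3) bx by (auto simp: \<sigma>'_def s_def)
    have sb: "s \<le> size B" "size B + s \<le> N" using S2[OF 1(1)] s_def by auto
    have le: "l \<le> j" "l \<le> e" "l + s + size B \<le> N" using 1 sb by (auto simp: l_def)
    show ?thesis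
    proof (cases "r + s \<le> N")
      case True
      have a1: "\<sigma> (\<beta> B) \<le> r - l" "r - l + \<sigma> (\<beta> B) \<le> N" using r1 True s_def by auto
      obtain y where y: "y \<subseteq># M" "\<beta> y = \<beta> B" "size y = r - l"
        using S3[OF 1(1) a1] by blast
      have "y + replicate_mset l a \<subseteq># M + replicate_mset e a"
        by (rule subset_mset.add_mono[OF y(1) rep_mono[OF le(2)]])
      moreover have "\<beta>' (y + replicate_mset l a) = \<beta>' x"
        using bk[OF y(1)] bx y r1 True by (auto simp: key_def s_def min_def)
      moreover have "size (y + replicate_mset l a) = r" using y r1 by simp
      ultimately show ?thesis by blast
    next
      case False
      have a2: "\<sigma> (\<beta> B) \<le> N - s - l" "N - s - l + \<sigma> (\<beta> B) \<le> N" using le sb s_def by auto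
      obtain y where y: "y \<subseteq># M" "\<beta> y = \<beta> B" "size y = N - s - l"
        using S3[OF 1(1) a2] by blast
      define j' where "j' = r - (N - s - l)"
      have je: "j' \<le> e" using r1 False by (simp add: j'_def)
      have "y + replicate_mset j' a \<subseteq># M + replicate_mset e a"
        by (rule subset_mset.add_mono[OF y(1) rep_mono[OF je]])
      moreover have "\<beta>' (y + replicate_mset j' a) = \<beta>' x"
        using bk[OF y(1)] bx y r1 False le by (auto simp: key_def s_def min_def j'_def)
      moreover have "size (y + replicate_mset j' a) = r" using y r1 False le by (simp add: j'_def)
      ultimately show ?thesis by blast
    qed
  qed
  have "scd {A. A \<subseteq># M + replicate_mset e a} (size M + e) \<beta>' \<sigma>'"
    unfolding scd_def N_def[symmetric] using P1 P2 P3 by blast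
  then show ?thesis by blast
qed

lemma scd_exists: "\<exists>\<beta> \<sigma>. scd {A. A \<subseteq># (M::'a multiset)} (size M) \<beta> \<sigma>"
proof (induction "size M" arbitrary: M rule: less_induct)
  case less
  show ?case
  proof (cases "M = {#}")
    case True
    have "scd {A. A \<subseteq># M} (size M) (\<lambda>_. []) (\<lambda>_. 0)"
      using True by (auto simp: scd_def)
    then show ?thesis by blast
  next
    case False
    then obtain a where a: "a \<in># M" by blast
    define M0 where "M0 = filter_mset (\<lambda>x. x \<noteq> a) M"
    have eq: "M = M0 + replicate_mset (count M a) a"
      by (simp add: multiset_eq_iff M0_def)
    have sz: "size M = size M0 + count M a" by (subst eq) simp
    then have "size M0 < size M" using a by simp
    then have "\<exists>\<beta> \<sigma>. scd {A. A \<subseteq># M0} (size M0) \<beta> \<sigma>" by (rule less)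
    then obtain \<beta> \<sigma> where h1: "scd {A. A \<subseteq># M0} (size M0) \<beta> \<sigma>" by (elim exE)
    have h2: "a \<notin># M0" by (simp add: M0_def)
    have "\<exists>\<beta>' \<sigma>'. scd {A. A \<subseteq># M0 + replicate_mset (count M a) a} (size M0 + count M a) \<beta>' \<sigma>'"
      by (rule scd_step[OF h1 h2])
    then obtain \<beta>' \<sigma>' where "scd {A. A \<subseteq># M0 + replicate_mset (count M a) a} (size M0 + count M a) \<beta>' \<sigma>'"
      by (elim exE)
    then have "scd {A. A \<subseteq># M} (size M) \<beta>' \<sigma>'" by (simp only: eq[symmetric] sz[symmetric])
    then show ?thesis by (intro exI)
  qed
qed

theorem lemma3p18:
  fixes n k :: nat and x :: real
  assumes "0 < n" and "x \<ge> 1"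
    and "Min (bigOmega ` maxdivs x n) \<le> k" and "k \<le> Max (bigOmega ` maxdivs x n)"
    and "\<forall>j::nat. Min (bigOmega ` maxdivs x n) \<le> j \<and> j \<le> Max (bigOmega ` maxdivs x n)
           \<longrightarrow> \<bar>real k - real (bigOmega n) / 2\<bar> \<le> \<bar>real j - real (bigOmega n) / 2\<bar>"
  shows "card (maxdivs x n) \<le> Ck k n"
proof -
  define P where "P = prime_factorization n"
  define N where "N = bigOmega n"
  have NP: "N = size P" by (simp add: bigOmega_def P_def N_def)
  obtain \<beta> \<sigma> where sc: "scd {A. A \<subseteq># P} (size P) \<beta> \<sigma>"
    using scd_exists[of P] by (elim exE)
  have S1: "\<And>x y. x \<subseteq># P \<Longrightarrow> y \<subseteq># P \<Longrightarrow> \<beta> x = \<beta> y \<Longrightarrow> x \<subseteq># y \<or> y \<subseteq># x"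
   and S2: "\<And>x. x \<subseteq># P \<Longrightarrow> \<sigma> (\<beta> x) \<le> size x \<and> size x + \<sigma> (\<beta> x) \<le> N"
   and S3: "\<And>x r. x \<subseteq># P \<Longrightarrow> \<sigma> (\<beta> x) \<le> r \<Longrightarrow> r + \<sigma> (\<beta> x) \<le> N \<Longrightarrow> (\<exists>y. y \<subseteq># P \<and> \<beta> y = \<beta> x \<and> size y = r)"
    using sc unfolding scd_def NP by auto
  have n0: "n \<noteq> 0" using assms(1) by simp
  have memM: "0 < d \<and> d dvd n" if "d \<in> maxdivs x n" for d
    using that unfolding maxdivs_def by blast
  have finM: "finite (maxdivs x n)"
    by (rule finite_subset[OF _ finite_divisors_nat[OF assms(1)]]) (use memM in blast)
  have anti: "d1 = d2" if "d1 \<in> maxdivs x n" "d2 \<in> maxdivs x n" "d1 dvd d2" for d1 d2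
  proof (rule ccontr)
    assume ne: "d1 \<noteq> d2"
    have "0 < d2 \<and> d2 dvd n \<and> real d2 \<le> x" using that(2) unfolding maxdivs_def by blast
    then have "\<exists>d'. 0 < d' \<and> d' dvd n \<and> real d' \<le> x \<and> d1 dvd d' \<and> d' \<noteq> d1"
      using that(3) ne by blast
    with that(1) show False unfolding maxdivs_def by blast
  qed
  have pfsub: "prime_factorization d \<subseteq># P" if "0 < d" "d dvd n" for d
    using prime_factorization_subset_iff_dvd[of d n] that n0 by (simp add: P_def)
  define Mn where "Mn = Min (bigOmega ` maxdivs x n)"
  define Mx where "Mx = Max (bigOmega ` maxdivs x n)"
  have cl: "\<bar>real k - real N / 2\<bar> \<le> \<bar>real j - real N / 2\<bar>" if "Mn \<le> j" "j \<le> Mx" for j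
    using assms(5) that unfolding Mn_def Mx_def N_def by blast
  have ex: "\<exists>d'. 0 < d' \<and> d' dvd n \<and> \<beta> (prime_factorization d') = \<beta> (prime_factorization d) \<and> bigOmega d' = k"
    if dM: "d \<in> maxdivs x n" for d
  proof -
    define A where "A = prime_factorization d"
    have A: "A \<subseteq># P" using pfsub memM[OF dM] by (simp add: A_def)
    define t where "t = size A"
    define s where "s = \<sigma> (\<beta> A)"
    have st: "s \<le> t" "t + s \<le> N" using S2[OF A] by (auto simp: s_def t_def)
    have tO: "bigOmega d = t" by (simp add: bigOmega_def A_def t_def)
    have "t \<in> bigOmega ` maxdivs x n" using dM tO by (metis image_eqI)
    then have tr: "Mn \<le> t" "t \<le> Mx" unfolding Mn_def Mx_def using finM by auto
    have kr: "Mn \<le> k" "k \<le> Mx" using assms(3,4) by (simp_all add: Mn_def Mx_def)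
    have ks: "s \<le> k \<and> k + s \<le> N"
    proof (cases "t < k")
      case True
      have j1: "Mn \<le> k - 1" "k - 1 \<le> Mx" using True tr kr by linarith+
      have "\<bar>real k - real N / 2\<bar> \<le> \<bar>real (k - 1) - real N / 2\<bar>" by (rule cl[OF j1])
      moreover have "real (k - 1) = real k - 1" using True by simp
      ultimately have "\<bar>real k - real N / 2\<bar> \<le> \<bar>real k - 1 - real N / 2\<bar>" by simp
      then have "real (2 * k) \<le> real (N + 1)" by (simp add: abs_if split: if_splits)
      then have "2 * k \<le> N + 1" by (simp only: of_nat_le_iff)
      then show ?thesis using True st by linarith
    next
      case False
      show ?thesis
      proof (cases "t = k")
        case True then show ?thesis using st by simp
      next
        case False2: False
        then have tk: "k < t" using False by simp
        have j1: "Mn \<le> k + 1" "k + 1 \<le> Mx" using tk tr kr by linarith+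
        have "\<bar>real k - real N / 2\<bar> \<le> \<bar>real (k + 1) - real N / 2\<bar>" by (rule cl[OF j1])
        then have "\<bar>real k - real N / 2\<bar> \<le> \<bar>real k + 1 - real N / 2\<bar>" by simp
        then have "real N \<le> real (2 * k + 1)" by (simp add: abs_if split: if_splits)
        then have "N \<le> 2 * k + 1" by (simp only: of_nat_le_iff)
        then show ?thesis using tk st by linarith
      qed
    qed
    obtain y where y: "y \<subseteq># P" "\<beta> y = \<beta> A" "size y = k"
      using S3[OF A, of k] ks s_def by blast
    have pr: "\<And>p. p \<in># y \<Longrightarrow> prime p"
    proof -
      fix p assume "p \<in># y"
      then have "p \<in># P" by (rule mset_subset_eqD[OF y(1)])
      then show "prime p" using in_prime_factors_imp_prime[of p n] by (simp add: P_def)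
    qed
    define d' where "d' = prod_mset y"
    have pfd: "prime_factorization d' = y" unfolding d'_def by (rule prime_factorization_prod_mset_primes[OF pr])
    have "0 \<notin># y" using pr by force
    then have d0: "d' \<noteq> 0" by (simp add: d'_def)
    have "d' dvd n" using prime_factorization_subset_iff_dvd[OF d0 n0] y(1) pfd by (simp add: P_def)
    moreover have "bigOmega d' = k" using pfd y(3) by (simp add: bigOmega_def)
    ultimately show ?thesis using d0 pfd y(2) A_def by (intro exI[of _ d']) simp
  qed
  define f where "f d = (SOME d'. 0 < d' \<and> d' dvd n \<and> \<beta> (prime_factorization d') = \<beta> (prime_factorization d) \<and> bigOmega d' = k)" for d
  have fp: "0 < f d \<and> f d dvd n \<and> \<beta> (prime_factorization (f d)) = \<beta> (prime_factorization d) \<and> bigOmega (f d) = k"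
    if "d \<in> maxdivs x n" for d
    unfolding f_def by (rule someI_ex[OF ex[OF that]])
  define T where "T = {d. 0 < d \<and> d dvd n \<and> bigOmega d = k}"
  have img: "f ` maxdivs x n \<subseteq> T" using fp unfolding T_def by blast
  have finT: "finite T"
    by (rule finite_subset[OF _ finite_divisors_nat[OF assms(1)]]) (auto simp: T_def)
  have inj: "inj_on f (maxdivs x n)"
  proof (rule inj_onI)
    fix d1 d2 assume h: "d1 \<in> maxdivs x n" "d2 \<in> maxdivs x n" "f d1 = f d2"
    have eqb: "\<beta> (prime_factorization d1) = \<beta> (prime_factorization d2)"
      using fp[OF h(1)] fp[OF h(2)] h(3) by simp
    have m1: "0 < d1 \<and> d1 dvd n" and m2: "0 < d2 \<and> d2 dvd n" using memM h by auto
    have "prime_factorization d1 \<subseteq># prime_factorization d2 \<or> prime_factorization d2 \<subseteq># prime_factorization d1"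
      using S1[OF pfsub pfsub eqb] m1 m2 by blast
    then show "d1 = d2"
    proof
      assume "prime_factorization d1 \<subseteq># prime_factorization d2"
      then have "d1 dvd d2" using prime_factorization_subset_iff_dvd[of d1 d2] m1 m2 by simp
      then show ?thesis by (rule anti[OF h(1) h(2)])
    next
      assume "prime_factorization d2 \<subseteq># prime_factorization d1"
      then have "d2 dvd d1" using prime_factorization_subset_iff_dvd[of d2 d1] m1 m2 by simp
      then show ?thesis by (rule anti[OF h(2) h(1), symmetric])
    qed
  qed
  have "card (maxdivs x n) \<le> card T" by (rule card_inj_on_le[OF inj img finT])
  then show ?thesis by (simp add: Ck_def T_def)
qed

end
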